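(* Let $n_1,n_2,n_3$ be pairwise coprime positive integers forming a minimal system of generators of $\mathcal S=\langle n_1,n_2,n_3\rangle$, and let $\{i,j,k\}=\{1,2,3\}$. Put $\lambda_{ij}=[-n_in_j^{-1}]_{n_k}$ and $\lambda_{ik}=[-n_in_k^{-1}]_{n_j}$. If $\lambda_{ij}<\frac{n_k}{2}$ and $\lambda_{ik}<\frac{n_j}{2}$, then $c_k=n_j-\lambda_{ik}$ and $c_j=n_k-\lambda_{ij}$.
   Context: $\mathbb N$ denotes the nonnegative integers. For integers $a_1,\dots,a_r$, $\langle a_1,\dots,a_r\rangle=\{\sum t_la_l: t_l\in\mathbb N\}$. Minimal system of generators means that no $n_l$ belongs to the monoid generated by the other two. For an integer $m$ and $n\ge 1$, $[m]_n\in\{0,\dots,n-1\}$ denotes the remainder of $m$ upon division by $n$; for $a$ coprime to $n$, the symbol $a^{-1}$ inside $[\cdot]_n$ denotes a multiplicative inverse of $a$ modulo $n$. For $\{i,j,k\}=\{1,2,3\}$, $\mathcal S_k=\{M\in\mathbb N: Mn_k\in\langle n_i,n_j\rangle\}$ and $c_k=\min(\mathcal S_k\setminus\{0\})$ (the minimal relation for $n_k$); $c_j$ is defined analogously with $\mathcal S_j=\{M\in\mathbb N: Mn_j\in\langle n_i,n_k\rangle\}$. *)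

theory Defs
  imports Main
begin

definition gen_monoid :: "nat list \<Rightarrow> nat set" where
  "gen_monoid as = {m. \<exists>t :: nat \<Rightarrow> nat. m = (\<Sum>l<length as. t l * as ! l)}"

definition S_set :: "nat \<Rightarrow> nat \<Rightarrow> nat \<Rightarrow> nat set" where
  "S_set nk ni nj = {M. M * nk \<in> gen_monoid [ni, nj]}"

definition c_min :: "nat \<Rightarrow> nat \<Rightarrow> nat \<Rightarrow> nat" where
  "c_min nk ni nj = (LEAST M. M \<in> S_set nk ni nj - {0})"

definition minimal_gens :: "(nat \<Rightarrow> nat) \<Rightarrow> bool" where
  "minimal_gens n \<longleftrightarrow> n 1 \<notin> gen_monoid [n 2, n 3] \<and> n 2 \<notin> gen_monoid [n 1, n 3]
     \<and> n 3 \<notin> gen_monoid [n 1, n 2]"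

end

theory Submission imports Defs begin

lemma gm2: "gen_monoid [x, y] = {m. \<exists>s t. m = s*x + t*y}"
proof -
  have h: "(\<Sum>l<length [x,y]. f l * [x,y] ! l) = f 0 * x + f 1 * y" for f :: "nat \<Rightarrow> nat"
    by (simp add: numeral_2_eq_2)
  have "(\<exists>f. m = (\<Sum>l<length [x,y]. f l * [x,y] ! l)) \<longleftrightarrow> (\<exists>s t. m = s*x + t*y)" for m
  proof
    assume "\<exists>f. m = (\<Sum>l<length [x,y]. f l * [x,y] ! l)"
    then show "\<exists>s t. m = s*x + t*y" unfolding h by blast
  next
    assume "\<exists>s t. m = s*x + t*y"
    then obtain s t where "m = s*x + t*y" by blast
    then show "\<exists>f. m = (\<Sum>l<length [x,y]. f l * [x,y] ! l)"
      by (intro exI[of _ "\<lambda>l. if l = 0 then s else t"]) (simp add: h)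
  qed
  then show ?thesis unfolding gen_monoid_def by blast
qed

lemma gm_comm: "gen_monoid [x, y] = gen_monoid [y, x]"
  unfolding gm2 by (metis add.commute)

lemma idx_cases:
  assumes "{i, j, k} = {1, 2, 3::nat}"
  shows "(i,j,k) \<in> {(1,2,3),(1,3,2),(2,1,3),(2,3,1),(3,1,2),(3,2,1)}"
proof -
  have m: "i \<in> {1,2,3}" "j \<in> {1,2,3}" "k \<in> {1,2,3}" using assms by blast+
  have "1 \<in> {i,j,k}" "2 \<in> {i,j,k}" "3 \<in> {i,j,k}" using assms by simp_all
  then show ?thesis using m by auto
qed

lemma identity:
  fixes a b c :: nat and l u :: int
  assumes a: "a > 0" and b: "b > 0" and c: "c > 0" and cop: "coprime b c"
    and nm: "\<not> (\<exists>x y. a = x*b + y*c)"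
    and l0: "0 \<le> l" and l1: "2*l < int c" and ld: "int c dvd int a + l * int b"
    and u0: "0 \<le> u" and u1: "2*u < int b" and ud: "int b dvd int a + u * int c"
  shows "int a + l * int b + u * int c = int b * int c"
proof -
  obtain t where t: "int a + u * int c = int b * t" using ud by blast
  obtain s where s: "int a + l * int b = int c * s" using ld by blast
  have e: "(t + l) * int b = (s + u) * int c" using t s by (simp add: algebra_simps)
  have copi: "coprime (int b) (int c)" using cop by simp
  have "int c dvd (t + l) * int b" using e by simp
  then have "int c dvd t + l" using copi by (meson coprime_commute coprime_dvd_mult_left_iff)
  then obtain r where r: "t + l = int c * r" by blast
  have tpos: "t > 0"
  proof -
    have "int b * t > 0" using t a u0 c by (smt (verit) of_nat_0_less_iff zero_le_mult_iff)
    then show ?thesis using b by (simp add: zero_less_mult_iff)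
  qed
  have r1: "r \<ge> 1"
  proof -
    have "int c * r > 0" using r tpos l0 by linarith
    then show ?thesis using c by (simp add: zero_less_mult_iff)
  qed
  have tt: "t = int c * r - l" using r by simp
  have "int a = int b * t - u * int c" using t by linarith
  then have aeq: "int a = (int c * r - l) * int b - u * int c" by (simp add: tt algebra_simps)
  have "r = 1"
  proof (rule ccontr)
    assume "r \<noteq> 1"
    then have r2: "r \<ge> 2" using r1 by simp
    define X where "X = (r - 2) * int c + (int c - l)"
    define Y where "Y = int b - u"
    have X0: "X \<ge> 0" unfolding X_def using r2 l1 l0 c by simp
    have Y0: "Y \<ge> 0" unfolding Y_def using u1 u0 by simp
    have "int a = X * int b + Y * int c" unfolding X_def Y_def aeq by (simp add: algebra_simps)
    then have "a = nat X * b + nat Y * c" using X0 Y0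
      by (metis nat_int nat_mult_distrib nat_add_distrib mult_nonneg_nonneg of_nat_0_le_iff)
    then show False using nm by blast
  qed
  then have "int a = (int c - l) * int b - u * int c" using aeq by simp
  then show ?thesis by (simp add: algebra_simps)
qed

lemma cmin:
  fixes a b c :: nat and l u :: int
  assumes a: "a > 0" and b: "b > 0" and c: "c > 0" and cop: "coprime b c"
    and l0: "0 \<le> l" and l1: "2*l < int c"
    and u0: "0 \<le> u" and u1: "2*u < int b"
    and idn: "int a + l * int b + u * int c = int b * int c"
  shows "int (c_min c a b) = int b - u"
proof -
  define N where "N = nat (int b - u)"
  have Ni: "int N = int b - u" unfolding N_def using u1 u0 by simp
  have Nmem: "N \<in> S_set c a b - {0}"
  proof -
    have "int N * int c = (int b - u) * int c" using Ni by simp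
    then have "int N * int c = int b * int c - u * int c" by (simp add: left_diff_distrib)
    then have "int (N * c) = int (1 * a + nat l * b)" using idn l0 by simp
    then have "N * c = 1 * a + nat l * b" by (simp only: of_nat_eq_iff)
    then have "N * c = 1 * a + nat l * b" by simp
    then have "N * c \<in> gen_monoid [a, b]" unfolding gm2 by blast
    moreover have "N \<noteq> 0" using Ni u1 u0 by linarith
    ultimately show ?thesis unfolding S_set_def by simp
  qed
  have low: "N \<le> M" if "M \<in> S_set c a b - {0}" for M
  proof (rule ccontr)
    assume "\<not> N \<le> M"
    then have MN: "int M < int b - u" using Ni by linarith
    from that obtain x y where M0: "M > 0" and xy: "M * c = x * a + y * b"
      unfolding S_set_def gm2 by auto
    have xyi: "int M * int c = int x * int a + int y * int b" using xy
      by (metis of_nat_add of_nat_mult)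
    have ai: "int a = int b * int c - l * int b - u * int c" using idn by simp
    have e: "(int M + int x * u) * int c = (int x * int c - int x * l + int y) * int b"
      using xyi unfolding ai by (simp add: algebra_simps)
    have copi: "coprime (int b) (int c)" using cop by simp
    have "int b dvd (int M + int x * u) * int c" using e by (metis dvd_triv_right)
    then have "int b dvd int M + int x * u" using copi by (meson coprime_dvd_mult_left_iff)
    then obtain q where q: "int M + int x * u = int b * q" by blast
    have "(int b * q) * int c = (int x * int c - int x * l + int y) * int b"
      using e unfolding q .
    then have "int b * (q * int c) = int b * (int x * int c - int x * l + int y)"
      by (simp add: algebra_simps)
    then have qc: "q * int c = int x * int c - int x * l + int y"
      using b by simp
    show False
    proof (cases "x = 0")
      case True
      then have "int M = int b * q" using q by simp
      then show False using MN M0 u0 b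
        by (smt (verit) mult_le_cancel_left1 mult_le_0_iff of_nat_0_less_iff)
    next
      case False
      have A: "(q - 1) * int b < (int x - 1) * u" using q MN by (simp add: algebra_simps)
      have "(int x - 1) * (2*u) \<le> (int x - 1) * int b"
        by (rule mult_left_mono) (use False u1 in auto)
      then have B: "2 * ((int x - 1) * u) \<le> (int x - 1) * int b"
        by (simp add: mult.commute mult.left_commute)
      have "2 * (q - 1) * int b < (int x - 1) * int b" using A B by (simp add: algebra_simps)
      then have C: "2 * (q - 1) < int x - 1" using b by (simp add: mult_less_cancel_right)
      have D: "2 * int x * l < int x * int c" using False l1 by simp
      have "2 * q * int c \<ge> 2 * int x * int c - 2 * int x * l" using qc by (simp add: algebra_simps)
      then have "2 * q * int c > int x * int c" using D by linarith
      then have "2 * q > int x" using c by (simp add: mult_less_cancel_right)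
      then show False using C by presburger
    qed
  qed
  have "c_min c a b = N" unfolding c_min_def
    by (rule Least_equality) (use Nmem low in auto)
  then show ?thesis using Ni by simp
qed

lemma lam_props:
  fixes a b c :: nat and inv lam :: int
  assumes c: "c > 0" and inv: "(inv * int b) mod int c = 1 mod int c"
    and lam: "lam = (- int a * inv) mod int c"
  shows "0 \<le> lam" "int c dvd int a + lam * int b"
proof -
  show "0 \<le> lam" using lam c by simp
  have d1: "int c dvd inv * int b - 1" using inv by (simp add: mod_eq_dvd_iff)
  then obtain p where p: "inv * int b - 1 = int c * p" by blast
  have lamE: "lam = - int a * inv - int c * ((- int a * inv) div int c)"
    using lam by (simp add: minus_div_mult_eq_mod[symmetric])
  have "int a + lam * int b = - int a * (inv * int b - 1) - int c * (((- int a * inv) div int c) * int b)"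
    by (subst lamE) (simp add: algebra_simps)
  also have "\<dots> = int c * (- int a * p - ((- int a * inv) div int c) * int b)"
    unfolding p by (simp add: algebra_simps)
  finally show "int c dvd int a + lam * int b" by simp
qed

theorem mainTheorem7:
  fixes n :: "nat \<Rightarrow> nat" and i j k :: nat and inv_j inv_k :: int
  assumes pos: "\<forall>l\<in>{1,2,3}. n l > 0"
    and cop: "coprime (n 1) (n 2)" "coprime (n 1) (n 3)" "coprime (n 2) (n 3)"
    and mingen: "minimal_gens n"
    and idx: "{i, j, k} = {1, 2, 3::nat}"
    and invj: "(inv_j * int (n j)) mod int (n k) = 1 mod int (n k)"
    and invk: "(inv_k * int (n k)) mod int (n j) = 1 mod int (n j)"
    and lij: "lambda_ij = (- int (n i) * inv_j) mod int (n k)"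
    and lik: "lambda_ik = (- int (n i) * inv_k) mod int (n j)"
    and h1: "2 * lambda_ij < int (n k)"
    and h2: "2 * lambda_ik < int (n j)"
  shows "int (c_min (n k) (n i) (n j)) = int (n j) - lambda_ik
       \<and> int (c_min (n j) (n i) (n k)) = int (n k) - lambda_ij"
proof -
  have G: "n i \<notin> gen_monoid [n j, n k]"
    using idx_cases[OF idx] mingen unfolding minimal_gens_def by (auto simp: gm_comm)
  have F: "n i > 0 \<and> n j > 0 \<and> n k > 0 \<and> coprime (n j) (n k) \<and>
      \<not> (\<exists>x y. n i = x * n j + y * n k)"
    using idx_cases[OF idx] pos cop G unfolding gm2
    by (auto simp: coprime_commute)
  then have a: "n i > 0" and b: "n j > 0" and c: "n k > 0" and cp: "coprime (n j) (n k)"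
    and nm: "\<not> (\<exists>x y. n i = x * n j + y * n k)" by auto
  have nm': "\<not> (\<exists>x y. n i = x * n k + y * n j)" using nm by (metis add.commute)
  have cp': "coprime (n k) (n j)" using cp by (simp add: coprime_commute)
  note L1 = lam_props[OF c invj lij]
  note L2 = lam_props[OF b invk lik]
  have idn: "int (n i) + lambda_ij * int (n j) + lambda_ik * int (n k) = int (n j) * int (n k)"
    by (rule identity[OF a b c cp nm L1(1) h1 L1(2) L2(1) h2 L2(2)])
  have idn': "int (n i) + lambda_ik * int (n k) + lambda_ij * int (n j) = int (n k) * int (n j)"
    using idn by (simp add: algebra_simps)
  show ?thesis
    using cmin[OF a b c cp L1(1) h1 L2(1) h2 idn] cmin[OF a c b cp' L2(1) h2 L1(1) h1 idn'] by simp
qed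

end
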